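(* For every positive integer $n$, let $\Lambda_n$ be the set of sequences $w=w_0w_1\cdots w_n\in\{0,1\}^{n+1}$ with $w_0=0$ and $w_n=1$. There exists a bijection $\lambda\mapsto w(\lambda)=w_0w_1\cdots w_n$ from $\mathcal{H}_n$ to $\Lambda_n$ such that for every $\lambda\in\mathcal{H}_n$: $$\ell(\lambda)=|\{1\le i\le n: w_i=1\}|,\qquad \mathrm{rep}(\lambda)=|\{1\le i\le n: w_i=w_{i-1}=1\}|,$$ $$\mathrm{even}(\lambda)=|\{1\le i\le n: w_i=1 \text{ and } |\{0\le j<i: w_j=0\}| \text{ is even}\}|.$$
   Context: A partition is a finite nonempty weakly decreasing sequence $\lambda=(\lambda_1,\ldots,\lambda_k)$ of positive integers; $\ell(\lambda)=k$. The perimeter is $\Gamma(\lambda)=\lambda_1+\ell(\lambda)-1$; $\mathcal{H}_n$ is the set of partitions with perimeter $n$. $\mathrm{rep}(\lambda)=|\{1\le i\le \ell(\lambda)-1:\lambda_i=\lambda_{i+1}\}|$ and $\mathrm{even}(\lambda)=|\{1\le i\le\ell(\lambda):\lambda_i\text{ even}\}|$. *)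

theory Defs
  imports Main
begin

text \<open>A partition is a nonempty weakly decreasing list of positive integers
  (lambda_1 = hd, lambda_i = xs ! (i-1)).\<close>
definition is_partition :: "nat list \<Rightarrow> bool" where
  "is_partition xs \<longleftrightarrow> xs \<noteq> [] \<and> sorted_wrt (\<ge>) xs \<and> (\<forall>x\<in>set xs. 0 < x)"

definition perimeter :: "nat list \<Rightarrow> nat" where
  "perimeter xs = hd xs + length xs - 1"

definition Hset :: "nat \<Rightarrow> nat list set" where
  "Hset n = {xs. is_partition xs \<and> perimeter xs = n}"

text \<open>rep: number of 1 <= i <= l-1 with lambda_i = lambda_{i+1}; in 0-based indexing
  this is the number of i with i+1 < length xs and xs!i = xs!(i+1).\<close>
definition rep :: "nat list \<Rightarrow> nat" where
  "rep xs = card {i. i + 1 < length xs \<and> xs ! i = xs ! (i + 1)}"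

definition even_parts :: "nat list \<Rightarrow> nat" where
  "even_parts xs = card {i. i < length xs \<and> even (xs ! i)}"

text \<open>Binary words w_0 ... w_n as bool lists of length n+1 (True = 1), w_0 = 0, w_n = 1.\<close>
definition Lambda :: "nat \<Rightarrow> bool list set" where
  "Lambda n = {w. length w = n + 1 \<and> \<not> w ! 0 \<and> w ! n}"

end

theory Submission
  imports Defs
begin

fun enc_from :: "nat \<Rightarrow> nat list \<Rightarrow> bool list" where
  "enc_from c [] = []"
| "enc_from c (y#ys) = replicate (y - c) False @ True # enc_from y ys"

fun zc_from :: "nat \<Rightarrow> bool list \<Rightarrow> nat list" where
  "zc_from c [] = []"
| "zc_from c (False#w) = zc_from (Suc c) w"
| "zc_from c (True#w) = c # zc_from c w"

fun eqc :: "nat list \<Rightarrow> nat" where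
  "eqc [] = 0"
| "eqc [x] = 0"
| "eqc (x#y#ys) = (if x = y then 1 else 0) + eqc (y#ys)"

lemma card_Suc_split:
  "card {i. i < Suc m \<and> P i} = (if P 0 then 1 else 0) + card {i. i < m \<and> P (Suc i)}"
proof -
  have e: "{i. i < Suc m \<and> P i} = (if P 0 then {0} else {}) \<union> Suc ` {i. i < m \<and> P (Suc i)}"
    by (auto simp: image_iff less_Suc_eq_0_disj)
  have "card (Suc ` {i. i < m \<and> P (Suc i)}) = card {i. i < m \<and> P (Suc i)}"
    by (rule card_image) simp
  then show ?thesis unfolding e by (auto simp: card_insert_if)
qed

lemma zc_rep: "zc_from c (replicate k False @ w) = zc_from (c + k) w"
  by (induction k arbitrary: c) auto

lemma zc_enc: "sorted ys \<Longrightarrow> \<forall>y\<in>set ys. c \<le> y \<Longrightarrow> zc_from c (enc_from c ys) = ys"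
  by (induction ys arbitrary: c) (auto simp: zc_rep)

lemma zc_ge: "\<forall>x\<in>set (zc_from c w). c \<le> x"
  by (induction c w rule: zc_from.induct) fastforce+

lemma zc_sorted: "sorted (zc_from c w)"
  by (induction c w rule: zc_from.induct) (auto simp: zc_ge)

lemma zc_nonempty: "w \<noteq> [] \<Longrightarrow> last w \<Longrightarrow> zc_from c w \<noteq> []"
  by (induction c w rule: zc_from.induct) (auto split: if_splits)

lemma enc_False: "zs \<noteq> [] \<Longrightarrow> c < hd zs \<Longrightarrow> enc_from c zs = False # enc_from (Suc c) zs"
proof (cases zs)
  case (Cons a list)
  assume "c < hd zs"
  then have "a - c = Suc (a - Suc c)" using Cons by simp
  then show ?thesis using Cons by simp
qed simp

lemma enc_zc: "w = [] \<or> last w \<Longrightarrow> enc_from c (zc_from c w) = w"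
proof (induction c w rule: zc_from.induct)
  case (2 c w)
  then have w: "w \<noteq> []" "last w" by (auto split: if_splits)
  then have ne: "zc_from (Suc c) w \<noteq> []" by (rule zc_nonempty)
  have "c < hd (zc_from (Suc c) w)" using zc_ge[of "Suc c" w] ne
    by (cases "zc_from (Suc c) w") auto
  then show ?case using 2 ne w by (simp add: enc_False)
next
  case (3 c w)
  then show ?case by (cases w) auto
qed auto

lemma enc_len: "sorted ys \<Longrightarrow> \<forall>y\<in>set ys. c \<le> y \<Longrightarrow>
  length (enc_from c ys) = length ys + (if ys = [] then 0 else last ys - c)"
proof (induction ys arbitrary: c)
  case (Cons a ys)
  show ?case
  proof (cases "ys = []")
    case False
    then have h: "a \<le> last ys" using Cons.prems by simp
    have "c \<le> a" using Cons.prems by simp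
    moreover have "length (enc_from a ys) = length ys + (last ys - a)"
      using Cons False by simp
    ultimately show ?thesis using h False by simp
  qed simp
qed simp

lemma enc_last: "ys \<noteq> [] \<Longrightarrow> enc_from c ys \<noteq> [] \<and> last (enc_from c ys)"
proof (induction ys arbitrary: c)
  case (Cons a ys)
  then show ?case by (cases ys) auto
qed simp

lemma zc_len: "length (zc_from c w) = length (filter id w)"
  by (induction c w rule: zc_from.induct) auto

lemma T_lemma: "card {i. i < length w \<and> w ! i} = length (zc_from c w)"
  by (simp add: zc_len length_filter_conv_card)

definition Ecnt :: "nat \<Rightarrow> bool list \<Rightarrow> nat" where
  "Ecnt c w = card {i. i < length w \<and> w ! i \<and> even (c + card {j. j < i \<and> \<not> w ! j})}"

lemma Ecnt_Cons: "Ecnt c (x#w) = (if x \<and> even c then 1 else 0) + Ecnt (if x then c else Suc c) w"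
proof -
  have "\<And>i. card {j. j < Suc i \<and> \<not> (x#w) ! j} = (if x then 0 else 1) + card {j. j < i \<and> \<not> w ! j}"
    by (subst card_Suc_split) simp
  then show ?thesis unfolding Ecnt_def
    by (subst length_Cons, subst card_Suc_split) (auto intro!: arg_cong[where f=card])
qed

lemma E_lemma: "Ecnt c w = length (filter even (zc_from c w))"
proof (induction c w rule: zc_from.induct)
  case (1 c) then show ?case by (simp add: Ecnt_def)
qed (auto simp: Ecnt_Cons)

definition Rcnt :: "bool \<Rightarrow> bool list \<Rightarrow> nat" where
  "Rcnt b w = card {i. i < length w \<and> w ! i \<and> (if i = 0 then b else w ! (i - 1))}"

lemma Rcnt_Cons: "Rcnt b (x#w) = (if x \<and> b then 1 else 0) + Rcnt x w"
proof -
  have e: "{i. i < length w \<and> (x#w) ! Suc i \<and> (if Suc i = 0 then b else (x#w) ! (Suc i - 1))}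
    = {i. i < length w \<and> w ! i \<and> (if i = 0 then x else w ! (i - 1))}"
    by (rule Collect_cong) (auto simp: nth_Cons')
  have "Rcnt b (x#w) = (if x \<and> b then 1 else 0) + card {i. i < length w \<and> (x#w) ! Suc i \<and> (if Suc i = 0 then b else (x#w) ! (Suc i - 1))}"
    unfolding Rcnt_def
    using card_Suc_split[of "length w" "\<lambda>i. (x#w)!i \<and> (if i=0 then b else (x#w)!(i-1))"]
    by simp
  then show ?thesis unfolding e Rcnt_def .
qed

lemma eqc_Cons_ne: "ys = [] \<or> hd ys \<noteq> c \<Longrightarrow> eqc (c # ys) = eqc ys"
  by (cases ys) auto

lemma R_lemma: "Rcnt b w = (if b then eqc (c # zc_from c w) else eqc (zc_from c w))"
proof (induction c w arbitrary: b rule: zc_from.induct)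
  case (1 c) then show ?case by (simp add: Rcnt_def)
next
  case (2 c w)
  have "zc_from (Suc c) w = [] \<or> hd (zc_from (Suc c) w) \<noteq> c"
    using zc_ge[of "Suc c" w] by (cases "zc_from (Suc c) w") auto
  then show ?case using 2 by (simp add: Rcnt_Cons eqc_Cons_ne)
next
  case (3 c w)
  then show ?case by (simp add: Rcnt_Cons)
qed

lemma eqc_snoc: "eqc (xs @ [y]) = eqc xs + (if xs \<noteq> [] \<and> last xs = y then 1 else 0)"
  by (induction xs rule: eqc.induct) auto

lemma eqc_Cons: "eqc (x # xs) = (if xs \<noteq> [] \<and> x = hd xs then 1 else 0) + eqc xs"
  by (cases xs) auto

lemma eqc_rev: "eqc (rev xs) = eqc xs"
  by (induction xs) (auto simp: eqc_snoc eqc_Cons last_rev)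

lemma rep_eqc: "rep xs = eqc xs"
proof (induction xs rule: eqc.induct)
  case 1 then show ?case by (simp add: rep_def)
next
  case (2 x) then show ?case by (simp add: rep_def)
next
  case (3 x y ys)
  have "rep (x#y#ys) = card {i. i < Suc (length ys) \<and> (x#y#ys) ! i = (x#y#ys) ! (Suc i)}"
    unfolding rep_def by simp
  also have "\<dots> = (if x = y then 1 else 0) + rep (y#ys)"
    by (subst card_Suc_split) (simp add: rep_def)
  finally show ?case using 3 by simp
qed

lemma even_parts_filter: "even_parts xs = length (filter even xs)"
  unfolding even_parts_def by (simp add: length_filter_conv_card)


lemma f_props:
  assumes "p \<in> Hset n"
  shows "zc_from 0 (enc_from 0 (rev p)) = rev p" "length (enc_from 0 (rev p)) = n + 1"
    "\<not> enc_from 0 (rev p) ! 0" "enc_from 0 (rev p) ! n"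
proof -
  have ip: "is_partition p" and per: "hd p + length p - 1 = n"
    using assms by (auto simp: Hset_def perimeter_def)
  have ne: "rev p \<noteq> []" and so: "sorted (rev p)" and pos: "\<forall>x\<in>set (rev p). 0 < x"
    using ip by (auto simp: is_partition_def sorted_wrt_rev)
  show "zc_from 0 (enc_from 0 (rev p)) = rev p" using zc_enc[OF so] by simp
  have lr: "last (rev p) = hd p" using ne by (simp add: last_rev)
  have "length (enc_from 0 (rev p)) = length p + hd p" using enc_len[OF so, of 0] ne lr by simp
  moreover have "length p \<ge> 1" using ne by (cases p) auto
  ultimately show len: "length (enc_from 0 (rev p)) = n + 1" using per by simp
  have "0 < hd (rev p)" using hd_in_set[OF ne] pos by blast
  then have "enc_from 0 (rev p) = False # enc_from 1 (rev p)" using enc_False[OF ne] by simp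
  then show "\<not> enc_from 0 (rev p) ! 0" by simp
  have "enc_from 0 (rev p) \<noteq> [] \<and> last (enc_from 0 (rev p))" using enc_last[OF ne] .
  then show "enc_from 0 (rev p) ! n" using len by (metis last_conv_nth diff_Suc_1 Suc_eq_plus1)
qed

lemma g_props:
  assumes "w \<in> Lambda n" "0 < n"
  shows "enc_from 0 (zc_from 0 w) = w" "rev (zc_from 0 w) \<in> Hset n"
proof -
  have lw: "length w = n + 1" and w0: "\<not> w ! 0" and wn: "w ! n" using assms by (auto simp: Lambda_def)
  have ne: "w \<noteq> []" using lw by auto
  have la: "last w" using wn lw ne by (simp add: last_conv_nth)
  show e: "enc_from 0 (zc_from 0 w) = w" using enc_zc la by blast
  define zs where "zs = zc_from 0 w"
  have zne: "zs \<noteq> []" unfolding zs_def using zc_nonempty ne la by blast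
  have so: "sorted zs" unfolding zs_def by (rule zc_sorted)
  obtain t where wt: "w = False # t" using ne w0 by (cases w) auto
  have pos: "\<forall>x\<in>set zs. 0 < x" using zc_ge[of 1 t] unfolding zs_def wt by auto
  have "length w = length zs + last zs"
    using enc_len[OF so, of 0] e zne unfolding zs_def[symmetric] by simp
  then have per: "last zs + length zs - 1 = n" using lw zne by simp
  show "rev zs \<in> Hset n"
    using zne so pos per
    by (simp add: Hset_def is_partition_def perimeter_def sorted_wrt_rev hd_rev)
qed

theorem lemma2p8:
  fixes n :: nat
  assumes "0 < n"
  shows "\<exists>f. bij_betw f (Hset n) (Lambda n) \<and>
    (\<forall>p\<in>Hset n.
       length p = card {i. 1 \<le> i \<and> i \<le> n \<and> f p ! i} \<and>
       rep p = card {i. 1 \<le> i \<and> i \<le> n \<and> f p ! i \<and> f p ! (i - 1)} \<and>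
       even_parts p = card {i. 1 \<le> i \<and> i \<le> n \<and> f p ! i \<and>
                               even (card {j. j < i \<and> \<not> f p ! j})})"
proof (intro exI conjI ballI)
  let ?f = "\<lambda>p. enc_from 0 (rev p)"
  show "bij_betw ?f (Hset n) (Lambda n)"
  proof (rule bij_betw_byWitness[where f' = "\<lambda>w. rev (zc_from 0 w)"])
    show "\<forall>a\<in>Hset n. rev (zc_from 0 (?f a)) = a" using f_props(1) by simp
    show "\<forall>a\<in>Lambda n. ?f (rev (zc_from 0 a)) = a" using g_props(1)[OF _ assms] by simp
    show "?f ` Hset n \<subseteq> Lambda n" using f_props(2-4) by (auto simp: Lambda_def)
    show "(\<lambda>w. rev (zc_from 0 w)) ` Lambda n \<subseteq> Hset n" using g_props(2)[OF _ assms] by auto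
  qed
  fix p assume p: "p \<in> Hset n"
  define w where "w = ?f p"
  have zc: "zc_from 0 w = rev p" and lw: "length w = n + 1" and w0: "\<not> w ! 0"
    using f_props[OF p] unfolding w_def by auto
  have s1: "{i. 1 \<le> i \<and> i \<le> n \<and> w ! i} = {i. i < length w \<and> w ! i}"
    using lw w0 by (auto simp: Suc_le_eq; metis gr0I)
  have s2: "{i. 1 \<le> i \<and> i \<le> n \<and> w ! i \<and> w ! (i - 1)}
     = {i. i < length w \<and> w ! i \<and> (if i = 0 then False else w ! (i - 1))}"
    using lw w0 by (auto simp: Suc_le_eq; metis gr0I)
  have s3: "{i. 1 \<le> i \<and> i \<le> n \<and> w ! i \<and> even (card {j. j < i \<and> \<not> w ! j})}
     = {i. i < length w \<and> w ! i \<and> even (0 + card {j. j < i \<and> \<not> w ! j})}"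
    using lw w0 by (auto simp: Suc_le_eq; metis gr0I)
  show "length p = card {i. 1 \<le> i \<and> i \<le> n \<and> ?f p ! i}"
    unfolding w_def[symmetric] s1 T_lemma[of w 0] zc by simp
  show "rep p = card {i. 1 \<le> i \<and> i \<le> n \<and> ?f p ! i \<and> ?f p ! (i - 1)}"
    unfolding w_def[symmetric] s2 Rcnt_def[symmetric] R_lemma[of False w 0] zc
    by (simp add: eqc_rev rep_eqc)
  show "even_parts p = card {i. 1 \<le> i \<and> i \<le> n \<and> ?f p ! i \<and>
                               even (card {j. j < i \<and> \<not> ?f p ! j})}"
    unfolding w_def[symmetric] s3 Ecnt_def[symmetric] E_lemma zc
    by (simp add: even_parts_filter rev_filter[symmetric])
qed

end
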